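(* For all $n \geq 0$: $$\sum_{k:\, a(k) \leq n} a(k) = \begin{cases} \frac{n^2}{4} - \frac{n}{4} + n\,t(n) & \text{if } n \equiv 0 \pmod 4,\\ \frac{n^2}{4} + \frac{n}{4} - \frac12 + t(n) & \text{if } n \equiv 1 \pmod 4,\\ \frac{n^2}{4} - \frac{n}{4} - \frac12 + (n+1)t(n) & \text{if } n \equiv 2 \pmod 4,\\ \frac{n^2}{4} + \frac{n}{4} & \text{if } n \equiv 3 \pmod 4,\end{cases}$$ $$\sum_{k:\, b(k) \leq n} b(k) = \begin{cases} \frac{n^2}{4} + \frac{3n}{4} - n\,t(n) & \text{if } n \equiv 0 \pmod 4,\\ \frac{n^2}{4} + \frac{n}{4} + \frac12 - t(n) & \text{if } n \equiv 1 \pmod 4,\\ \frac{n^2}{4} + \frac{3n}{4} + \frac12 - (n+1)t(n) & \text{if } n \equiv 2 \pmod 4,\\ \frac{n^2}{4} + \frac{n}{4} & \text{if } n \equiv 3 \pmod 4.\end{cases}$$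
   Context: The Thue–Morse sequence $(t(n))_{n\geq 0}$ is defined by $t(0)=0$, $t(2n)=t(n)$, $t(2n+1)=1-t(n)$. A nonnegative integer is odious if the sum of its binary digits is odd and evil if it is even. $(a(n))_{n\geq0}$ is the increasing sequence of odious numbers and $(b(n))_{n\geq 0}$ the increasing sequence of evil numbers, both indexed from $0$ (so $a(0)=1, a(1)=2,\ldots$ and $b(0)=0, b(1)=3, \ldots$). *)

theory Defs
  imports Complex_Main "HOL-Library.Infinite_Set"
begin

fun tm :: "nat \<Rightarrow> nat" where
  "tm n = (if n = 0 then 0 else if even n then tm (n div 2) else 1 - tm (n div 2))"

fun bitsum :: "nat \<Rightarrow> nat" where
  "bitsum n = (if n = 0 then 0 else n mod 2 + bitsum (n div 2))"

definition odious :: "nat \<Rightarrow> bool" where "odious n \<longleftrightarrow> odd (bitsum n)"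
definition evil :: "nat \<Rightarrow> bool" where "evil n \<longleftrightarrow> even (bitsum n)"

text \<open>a(k), b(k): increasing enumerations (indexed from 0) of odious / evil numbers.\<close>
definition oa :: "nat \<Rightarrow> nat" where "oa = enumerate {m. odious m}"
definition eb :: "nat \<Rightarrow> nat" where "eb = enumerate {m. evil m}"

end

theory Submission
  imports Defs
begin

declare tm.simps[simp del] bitsum.simps[simp del]

lemma tm0[simp]: "tm 0 = 0" by (subst tm.simps) simp
lemma bitsum0[simp]: "bitsum 0 = 0" by (subst bitsum.simps) simp

lemma tm_le1: "tm n \<le> 1"
  by (induction n rule: tm.induct) (subst tm.simps, auto)

lemma tm_even: "tm (2*n) = tm n"
  by (subst tm.simps) auto

lemma tm_odd: "tm (2*n+1) = 1 - tm n"
  by (subst tm.simps) auto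

lemma tm_bitsum: "tm n = 1 \<longleftrightarrow> odd (bitsum n)"
proof (induction n rule: less_induct)
  case (less n)
  show ?case
  proof (cases "n = 0")
    case True then show ?thesis by simp
  next
    case False
    have ih: "tm (n div 2) = 1 \<longleftrightarrow> odd (bitsum (n div 2))" using less False by simp
    have b: "bitsum n = n mod 2 + bitsum (n div 2)" using False by (subst bitsum.simps) simp
    have t: "tm n = (if even n then tm (n div 2) else 1 - tm (n div 2))" using False by (subst tm.simps) simp
    have "tm (n div 2) \<le> 1" by (rule tm_le1)
    then show ?thesis using ih b t by (cases "even n") (auto simp: odd_iff_mod_2_eq_one)
  qed
qed

lemma odious_tm: "odious m \<longleftrightarrow> tm m = 1"
  unfolding odious_def by (rule tm_bitsum[symmetric])

lemma evil_tm: "evil m \<longleftrightarrow> tm m \<noteq> 1"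
  unfolding evil_def using tm_bitsum[of m] by blast

lemma inf_odious: "infinite {m. odious m}"
  unfolding infinite_nat_iff_unbounded_le
proof
  fix m
  have "tm (2*m) \<le> 1" "tm (2*m+1) = 1 - tm (2*m)" using tm_le1 tm_odd[of m] tm_even[of m] by auto
  then have "tm (2*m) = 1 \<or> tm (2*m+1) = 1" by auto
  moreover have "2*m \<ge> m" "2*m+1 \<ge> m" by auto
  ultimately show "\<exists>n\<ge>m. n \<in> {m. odious m}" unfolding mem_Collect_eq odious_tm by blast
qed

lemma inf_evil: "infinite {m. evil m}"
  unfolding infinite_nat_iff_unbounded_le
proof
  fix m
  have "tm (2*m) \<le> 1" "tm (2*m+1) = 1 - tm (2*m)" using tm_le1 tm_odd[of m] tm_even[of m] by auto
  then have "tm (2*m) \<noteq> 1 \<or> tm (2*m+1) \<noteq> 1" by auto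
  moreover have "2*m \<ge> m" "2*m+1 \<ge> m" by auto
  ultimately show "\<exists>n\<ge>m. n \<in> {m. evil m}" unfolding mem_Collect_eq evil_tm by blast
qed

lemma sum_enum:
  fixes S :: "nat set"
  assumes S: "infinite S"
  shows "(\<Sum>k\<in>{k. enumerate S k \<le> n}. enumerate S k) = (\<Sum>m\<in>{m\<in>S. m \<le> n}. m)"
proof -
  have inj: "inj_on (enumerate S) {k. enumerate S k \<le> n}"
    by (rule inj_on_subset[OF inj_enumerate[OF S]]) simp
  have img: "enumerate S ` {k. enumerate S k \<le> n} = {m\<in>S. m \<le> n}"
    using enumerate_in_set[OF S] enumerate_Ex[OF S] by blast
  have "(\<Sum>m\<in>{m\<in>S. m \<le> n}. m) = (\<Sum>m\<in>enumerate S ` {k. enumerate S k \<le> n}. m)"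
    using img by simp
  also have "\<dots> = (\<Sum>k\<in>{k. enumerate S k \<le> n}. enumerate S k)"
    using sum.reindex[OF inj, of id] by simp
  finally show ?thesis by simp
qed

definition f :: "nat \<Rightarrow> real" where
  "f n = (\<Sum>m<n. if tm m = 1 then real m else 0)"

lemma tm4a: "tm (4*j) = tm j"
proof -
  have "tm (4*j) = tm (2*(2*j))" by (simp only: mult.assoc[symmetric]) simp
  also have "\<dots> = tm j" by (simp only: tm_even)
  finally show ?thesis .
qed
lemma tm4b: "tm (4*j+1) = 1 - tm j"
proof -
  have "tm (4*j+1) = tm (2*(2*j)+1)" by (simp only: mult.assoc[symmetric]) simp
  also have "\<dots> = 1 - tm j" by (simp only: tm_even tm_odd)
  finally show ?thesis .
qed
lemma tm4c: "tm (4*j+2) = 1 - tm j"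
proof -
  have e: "4*j+2 = 2*(2*j+1)" by simp
  have "tm (4*j+2) = tm (2*(2*j+1))" by (simp only: e)
  also have "\<dots> = 1 - tm j" by (simp only: tm_even tm_odd)
  finally show ?thesis .
qed
lemma tm4d: "tm (4*j+3) = tm j"
proof -
  have e: "4*j+3 = 2*(2*j+1)+1" by simp
  have "tm (4*j+3) = tm (2*(2*j+1)+1)" by (simp only: e)
  also have "\<dots> = 1 - (1 - tm j)" by (simp only: tm_even tm_odd)
  also have "\<dots> = tm j" using tm_le1[of j] by simp
  finally show ?thesis .
qed
lemmas tm4 = tm4a tm4b tm4c tm4d

lemma f_Suc: "f (Suc n) = f n + (if tm n = 1 then real n else 0)"
  by (simp add: f_def)

lemma tmS1: "tm (Suc (4*j)) = 1 - tm j"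
proof -
  have e: "Suc (4*j) = 4*j+1" by simp
  show ?thesis by (simp only: e tm4b)
qed
lemma tmS2: "tm (Suc (Suc (4*j))) = 1 - tm j"
proof -
  have e: "Suc (Suc (4*j)) = 4*j+2" by simp
  show ?thesis by (simp only: e tm4c)
qed
lemma tmS3: "tm (Suc (Suc (Suc (4*j)))) = tm j"
proof -
  have e: "Suc (Suc (Suc (4*j))) = 4*j+3" by simp
  show ?thesis by (simp only: e tm4d)
qed

lemma f1: "f (Suc (4*j)) = f (4*j) + (if tm j = 1 then real (4*j) else 0)"
  by (simp only: f_Suc tm4a)
lemma f2: "f (Suc (Suc (4*j))) = f (Suc (4*j)) + (if tm j = 1 then 0 else real (4*j) + 1)"
  by (simp only: f_Suc tmS1) (use tm_le1[of j] in auto)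
lemma f3: "f (Suc (Suc (Suc (4*j)))) = f (Suc (Suc (4*j))) + (if tm j = 1 then 0 else real (4*j) + 2)"
  by (simp only: f_Suc tmS2) (use tm_le1[of j] in auto)
lemma f4s: "f (Suc (Suc (Suc (Suc (4*j))))) = f (Suc (Suc (Suc (4*j)))) + (if tm j = 1 then real (4*j) + 3 else 0)"
  by (simp only: f_Suc tmS3) (use tm_le1[of j] in auto)

lemma f4: "f (4*j) = 4 * real j ^ 2 - real j"
proof (induction j)
  case 0 then show ?case by (simp add: f_def)
next
  case (Suc j)
  have e: "4 * Suc j = Suc (Suc (Suc (Suc (4*j))))" by simp
  have "tm j \<le> 1" by (rule tm_le1)
  then have "tm j = 0 \<or> tm j = 1" by auto
  then show ?case unfolding e f4s f3 f2 f1 Suc.IH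
    by (auto simp: algebra_simps power2_eq_square)
qed

lemma total: "(\<Sum>m<n. real m) = real n * (real n - 1) / 2"
  by (induction n) (auto simp: field_simps)

lemma odsum: "real (\<Sum>k\<in>{k. oa k \<le> n}. oa k) = f (Suc n)"
proof -
  have "(\<Sum>k\<in>{k. oa k \<le> n}. oa k) = (\<Sum>m\<in>{m\<in>{m. odious m}. m \<le> n}. m)"
    unfolding oa_def by (rule sum_enum[OF inf_odious])
  also have "{m\<in>{m. odious m}. m \<le> n} = {m\<in>{..<Suc n}. tm m = 1}"
    by (auto simp: odious_tm)
  also have "(\<Sum>m\<in>{m\<in>{..<Suc n}. tm m = 1}. m) = (\<Sum>m<Suc n. if tm m = 1 then m else 0)"
    by (rule sum.inter_filter) simp
  finally have "real (\<Sum>k\<in>{k. oa k \<le> n}. oa k) = real (\<Sum>m<Suc n. if tm m = 1 then m else 0)" by simp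
  also have "\<dots> = f (Suc n)" unfolding f_def of_nat_sum by (rule sum.cong) auto
  finally show ?thesis .
qed

lemma evsum: "real (\<Sum>k\<in>{k. eb k \<le> n}. eb k) = real (Suc n) * real n / 2 - f (Suc n)"
proof -
  have "(\<Sum>k\<in>{k. eb k \<le> n}. eb k) = (\<Sum>m\<in>{m\<in>{m. evil m}. m \<le> n}. m)"
    unfolding eb_def by (rule sum_enum[OF inf_evil])
  also have "{m\<in>{m. evil m}. m \<le> n} = {m\<in>{..<Suc n}. tm m \<noteq> 1}"
    by (auto simp: evil_tm)
  also have "(\<Sum>m\<in>{m\<in>{..<Suc n}. tm m \<noteq> 1}. m) = (\<Sum>m<Suc n. if tm m \<noteq> 1 then m else 0)"
    by (rule sum.inter_filter) simp
  finally have "real (\<Sum>k\<in>{k. eb k \<le> n}. eb k) = real (\<Sum>m<Suc n. if tm m \<noteq> 1 then m else 0)"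
    by simp
  also have "\<dots> = (\<Sum>m<Suc n. if tm m \<noteq> 1 then real m else 0)" unfolding of_nat_sum by (rule sum.cong) auto
  also have "\<dots> = (\<Sum>m<Suc n. real m) - f (Suc n)"
    unfolding f_def sum_subtractf[symmetric] by (rule sum.cong) auto
  also have "\<dots> = real (Suc n) * real n / 2 - f (Suc n)" by (simp only: total) simp
  finally show ?thesis .
qed

theorem corollary2:
  fixes n :: nat
  shows "real (\<Sum>k\<in>{k. oa k \<le> n}. oa k) =
     (if n mod 4 = 0 then real n ^ 2 / 4 - real n / 4 + real n * real (tm n)
      else if n mod 4 = 1 then real n ^ 2 / 4 + real n / 4 - 1/2 + real (tm n)
      else if n mod 4 = 2 then real n ^ 2 / 4 - real n / 4 - 1/2 + (real n + 1) * real (tm n)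
      else real n ^ 2 / 4 + real n / 4)
   \<and> real (\<Sum>k\<in>{k. eb k \<le> n}. eb k) =
     (if n mod 4 = 0 then real n ^ 2 / 4 + 3 * real n / 4 - real n * real (tm n)
      else if n mod 4 = 1 then real n ^ 2 / 4 + real n / 4 + 1/2 - real (tm n)
      else if n mod 4 = 2 then real n ^ 2 / 4 + 3 * real n / 4 + 1/2 - (real n + 1) * real (tm n)
      else real n ^ 2 / 4 + real n / 4)"
proof -
  define j where "j = n div 4"
  define r where "r = n mod 4"
  have n: "n = 4*j + r" unfolding j_def r_def by simp
  have r: "r < 4" unfolding r_def by simp
  have "tm j \<le> 1" by (rule tm_le1)
  then have tj: "tm j = 0 \<or> tm j = 1" by auto
  have nm: "n mod 4 = r" unfolding r_def ..
  have cases: "r = 0 \<or> r = 1 \<or> r = 2 \<or> r = 3" using r by auto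
  have f0: "f (4*j) = 4 * real j ^ 2 - real j" by (rule f4)
  show ?thesis
  proof -
    have A: "f (Suc n) = (if r = 0 then real n ^ 2 / 4 - real n / 4 + real n * real (tm n)
      else if r = 1 then real n ^ 2 / 4 + real n / 4 - 1/2 + real (tm n)
      else if r = 2 then real n ^ 2 / 4 - real n / 4 - 1/2 + (real n + 1) * real (tm n)
      else real n ^ 2 / 4 + real n / 4)"
    proof -
      from cases show ?thesis
      proof (elim disjE)
        assume [simp]: "r = 0"
        have en: "n = 4*j" by (simp add: n)
        from tj show ?thesis unfolding en f1 f0 tm4a
          by (elim disjE) (auto simp: power2_eq_square algebra_simps)
      next
        assume [simp]: "r = 1"
        have en: "n = Suc (4*j)" by (simp add: n)
        from tj show ?thesis unfolding en f2 f1 f0 tmS1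
          by (elim disjE) (auto simp: power2_eq_square field_simps)
      next
        assume [simp]: "r = 2"
        have en: "n = Suc (Suc (4*j))" by (simp add: n)
        from tj show ?thesis unfolding en f3 f2 f1 f0 tmS2
          by (elim disjE) (auto simp: power2_eq_square field_simps)
      next
        assume [simp]: "r = 3"
        have en: "n = Suc (Suc (Suc (4*j)))" by (simp add: n)
        from tj show ?thesis unfolding en f4s f3 f2 f1 f0 tmS3
          by (elim disjE) (auto simp: power2_eq_square field_simps)
      qed
    qed
    show ?thesis unfolding odsum evsum nm A
      by (auto simp: field_simps power2_eq_square)
  qed
qed

end
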